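(* Let $\mathcal{O}$ be a nonsymmetric operad, $\pi\in\mathcal{O}(2)$ a multiplication on $\mathcal{O}$, and $R\in\mathcal{O}(1)$ a Rota-Baxter element with respect to $\pi$, i.e. $(\pi\circ_2 R)\circ_1 R=R\circ_1(\pi\circ_1 R+\pi\circ_2 R)$. Put $\pi_\prec=\pi\circ_2 R$ and $\pi_\succ=\pi\circ_1 R$. Then $(\pi_\prec,\pi_\succ)$ is a dendriform-multiplication on $\mathcal{O}$.
   Context: A nonsymmetric operad $\mathcal{O}$ (over a commutative unital ring $\mathbf{k}$ of characteristic $0$) consists of $\mathbf{k}$-modules $\mathcal{O}(n)$, $n\ge1$, bilinear partial compositions $\circ_i:\mathcal{O}(m)\otimes\mathcal{O}(n)\to\mathcal{O}(m+n-1)$ and a unit $\mathds{1}\in\mathcal{O}(1)$ satisfying $(f\circ_i g)\circ_{i+j-1}h=f\circ_i(g\circ_j h)$, $(f\circ_i g)\circ_{j+n-1}h=(f\circ_j h)\circ_i g$ for $i<j$, and $f\circ_i\mathds{1}=\mathds{1}\circ_1 f=f$. A multiplication is $\pi\in\mathcal{O}(2)$ with $\pi\circ_1\pi=\pi\circ_2\pi$. A dendriform-multiplication on $\mathcal{O}$ is a pair $(\pi_\prec,\pi_\succ)$ of elements of $\mathcal{O}(2)$ with $\pi_\prec\circ_1\pi_\prec=\pi_\prec\circ_2(\pi_\prec+\pi_\succ)$, $\pi_\prec\circ_1\pi_\succ=\pi_\succ\circ_2\pi_\prec$, and $\pi_\succ\circ_1(\pi_\prec+\pi_\succ)=\pi_\succ\circ_2\pi_\succ$.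 *)

theory Defs
  imports Main "HOL.Modules"
begin

text \<open>The components Op(n), n \<ge> 1, are
submodules Op n of an ambient 'k-module 'o (scalar multiplication smul);
the partial composition o_i : Op(m) x Op(n) -> Op(m+n-1) is pcomp m n i,
required to be bilinear on the carriers; unit is the operadic unit.\<close>

definition ns_operad ::
  "('k::comm_ring_1 \<Rightarrow> 'o::ab_group_add \<Rightarrow> 'o) \<Rightarrow> (nat \<Rightarrow> 'o set)
   \<Rightarrow> (nat \<Rightarrow> nat \<Rightarrow> nat \<Rightarrow> 'o \<Rightarrow> 'o \<Rightarrow> 'o) \<Rightarrow> 'o \<Rightarrow> bool" where
  "ns_operad smul Op pcomp unit \<longleftrightarrow>
     module smul \<and>
     (\<forall>n\<ge>1. 0 \<in> Op n \<and> (\<forall>x\<in>Op n. \<forall>y\<in>Op n. x + y \<in> Op n) \<and> (\<forall>c. \<forall>x\<in>Op n. smul c x \<in> Op n)) \<and>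
     (\<forall>m n i f g. 1 \<le> m \<and> 1 \<le> n \<and> 1 \<le> i \<and> i \<le> m \<and> f \<in> Op m \<and> g \<in> Op n
        \<longrightarrow> pcomp m n i f g \<in> Op (m + n - 1)) \<and>
     (\<forall>m n i f f' g. 1 \<le> m \<and> 1 \<le> n \<and> 1 \<le> i \<and> i \<le> m \<and> f \<in> Op m \<and> f' \<in> Op m \<and> g \<in> Op n
        \<longrightarrow> pcomp m n i (f + f') g = pcomp m n i f g + pcomp m n i f' g) \<and>
     (\<forall>m n i f g g'. 1 \<le> m \<and> 1 \<le> n \<and> 1 \<le> i \<and> i \<le> m \<and> f \<in> Op m \<and> g \<in> Op n \<and> g' \<in> Op n
        \<longrightarrow> pcomp m n i f (g + g') = pcomp m n i f g + pcomp m n i f g') \<and>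
     (\<forall>m n i c f g. 1 \<le> m \<and> 1 \<le> n \<and> 1 \<le> i \<and> i \<le> m \<and> f \<in> Op m \<and> g \<in> Op n
        \<longrightarrow> pcomp m n i (smul c f) g = smul c (pcomp m n i f g)
          \<and> pcomp m n i f (smul c g) = smul c (pcomp m n i f g)) \<and>
     (\<forall>m n p i j f g h. 1 \<le> m \<and> 1 \<le> n \<and> 1 \<le> p \<and> 1 \<le> i \<and> i \<le> m \<and> 1 \<le> j \<and> j \<le> n
        \<and> f \<in> Op m \<and> g \<in> Op n \<and> h \<in> Op p
        \<longrightarrow> pcomp (m + n - 1) p (i + j - 1) (pcomp m n i f g) h
            = pcomp m (n + p - 1) i f (pcomp n p j g h)) \<and>
     (\<forall>m n p i j f g h. 1 \<le> m \<and> 1 \<le> n \<and> 1 \<le> p \<and> 1 \<le> i \<and> i < j \<and> j \<le> m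
        \<and> f \<in> Op m \<and> g \<in> Op n \<and> h \<in> Op p
        \<longrightarrow> pcomp (m + n - 1) p (j + n - 1) (pcomp m n i f g) h
            = pcomp (m + p - 1) n i (pcomp m p j f h) g) \<and>
     unit \<in> Op 1 \<and>
     (\<forall>m i f. 1 \<le> m \<and> 1 \<le> i \<and> i \<le> m \<and> f \<in> Op m
        \<longrightarrow> pcomp m 1 i f unit = f) \<and>
     (\<forall>m f. 1 \<le> m \<and> f \<in> Op m \<longrightarrow> pcomp 1 m 1 unit f = f)"

definition is_multiplication ::
  "(nat \<Rightarrow> 'o set) \<Rightarrow> (nat \<Rightarrow> nat \<Rightarrow> nat \<Rightarrow> 'o \<Rightarrow> 'o \<Rightarrow> 'o) \<Rightarrow> 'o \<Rightarrow> bool" where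
  "is_multiplication Op pcomp \<pi> \<longleftrightarrow> \<pi> \<in> Op 2 \<and> pcomp 2 2 1 \<pi> \<pi> = pcomp 2 2 2 \<pi> \<pi>"

definition is_rota_baxter ::
  "(nat \<Rightarrow> 'o::plus set) \<Rightarrow> (nat \<Rightarrow> nat \<Rightarrow> nat \<Rightarrow> 'o \<Rightarrow> 'o \<Rightarrow> 'o) \<Rightarrow> 'o \<Rightarrow> 'o \<Rightarrow> bool" where
  "is_rota_baxter Op pcomp \<pi> R \<longleftrightarrow> R \<in> Op 1 \<and>
     pcomp 2 1 1 (pcomp 2 1 2 \<pi> R) R = pcomp 1 2 1 R (pcomp 2 1 1 \<pi> R + pcomp 2 1 2 \<pi> R)"

definition is_dendriform_multiplication ::
  "(nat \<Rightarrow> 'o::plus set) \<Rightarrow> (nat \<Rightarrow> nat \<Rightarrow> nat \<Rightarrow> 'o \<Rightarrow> 'o \<Rightarrow> 'o) \<Rightarrow> 'o \<Rightarrow> 'o \<Rightarrow> bool" where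
  "is_dendriform_multiplication Op pcomp pl pr \<longleftrightarrow> pl \<in> Op 2 \<and> pr \<in> Op 2 \<and>
     pcomp 2 2 1 pl pl = pcomp 2 2 2 pl (pl + pr) \<and>
     pcomp 2 2 1 pl pr = pcomp 2 2 2 pr pl \<and>
     pcomp 2 2 1 pr (pl + pr) = pcomp 2 2 2 pr pr"

end

theory Submission
  imports Defs
begin

theorem proposition4p4:
  fixes smul :: "'k::{comm_ring_1, semiring_char_0} \<Rightarrow> 'o::ab_group_add \<Rightarrow> 'o"
    and Op :: "nat \<Rightarrow> 'o set"
    and pcomp :: "nat \<Rightarrow> nat \<Rightarrow> nat \<Rightarrow> 'o \<Rightarrow> 'o \<Rightarrow> 'o"
    and unit \<pi> R :: 'o
  assumes "ns_operad smul Op pcomp unit"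
    and "is_multiplication Op pcomp \<pi>"
    and "is_rota_baxter Op pcomp \<pi> R"
  shows "is_dendriform_multiplication Op pcomp (pcomp 2 1 2 \<pi> R) (pcomp 2 1 1 \<pi> R)"
proof -
  note D = assms(1)[unfolded ns_operad_def]
  note C2 = D[THEN conjunct2]
  have D2: "\<forall>n\<ge>1. 0 \<in> Op n \<and> (\<forall>x\<in>Op n. \<forall>y\<in>Op n. x + y \<in> Op n) \<and> (\<forall>c. \<forall>x\<in>Op n. smul c x \<in> Op n)"
    using C2[THEN conjunct1] .
  note C3 = C2[THEN conjunct2]
  note D3 = C3[THEN conjunct1, rule_format]
  note C7 = C3[THEN conjunct2, THEN conjunct2, THEN conjunct2, THEN conjunct2]
  note D7 = C7[THEN conjunct1, rule_format]
  note D8 = C7[THEN conjunct2, THEN conjunct1, rule_format]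
  have mem: "\<And>m n i f g. 1 \<le> m \<Longrightarrow> 1 \<le> n \<Longrightarrow> 1 \<le> i \<Longrightarrow> i \<le> m \<Longrightarrow> f \<in> Op m \<Longrightarrow> g \<in> Op n
        \<Longrightarrow> pcomp m n i f g \<in> Op (m + n - 1)"
    using D3 by blast
  have add: "\<And>n x y. 1 \<le> n \<Longrightarrow> x \<in> Op n \<Longrightarrow> y \<in> Op n \<Longrightarrow> x + y \<in> Op n"
    using D2 by blast
  have as: "\<And>m n p i j f g h. 1 \<le> m \<Longrightarrow> 1 \<le> n \<Longrightarrow> 1 \<le> p \<Longrightarrow> 1 \<le> i \<Longrightarrow> i \<le> m \<Longrightarrow> 1 \<le> j \<Longrightarrow> j \<le> n
        \<Longrightarrow> f \<in> Op m \<Longrightarrow> g \<in> Op n \<Longrightarrow> h \<in> Op p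
        \<Longrightarrow> pcomp (m + n - 1) p (i + j - 1) (pcomp m n i f g) h
            = pcomp m (n + p - 1) i f (pcomp n p j g h)"
    using D7 by blast
  have par: "\<And>m n p i j f g h. 1 \<le> m \<Longrightarrow> 1 \<le> n \<Longrightarrow> 1 \<le> p \<Longrightarrow> 1 \<le> i \<Longrightarrow> i < j \<Longrightarrow> j \<le> m
        \<Longrightarrow> f \<in> Op m \<Longrightarrow> g \<in> Op n \<Longrightarrow> h \<in> Op p
        \<Longrightarrow> pcomp (m + n - 1) p (j + n - 1) (pcomp m n i f g) h
            = pcomp (m + p - 1) n i (pcomp m p j f h) g"
    using D8 by blast
  have pi: "\<pi> \<in> Op 2" and mul: "pcomp 2 2 1 \<pi> \<pi> = pcomp 2 2 2 \<pi> \<pi>"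
    using assms(2) unfolding is_multiplication_def by auto
  have R: "R \<in> Op 1" and rb: "pcomp 2 1 1 (pcomp 2 1 2 \<pi> R) R = pcomp 1 2 1 R (pcomp 2 1 1 \<pi> R + pcomp 2 1 2 \<pi> R)"
    using assms(3) unfolding is_rota_baxter_def by auto
  define pl where "pl = pcomp 2 1 2 \<pi> R"
  define pr where "pr = pcomp 2 1 1 \<pi> R"
  have pl: "pl \<in> Op 2" using mem[of 2 1 2 \<pi> R] pi R unfolding pl_def by (simp add: numeral_eq_Suc)
  have prm: "pr \<in> Op 2" using mem[of 2 1 1 \<pi> R] pi R unfolding pr_def by (simp add: numeral_eq_Suc)
  have P: "pl + pr \<in> Op 2" using add pl prm by (simp add: numeral_eq_Suc)
  have rb': "pcomp 1 2 1 R (pl + pr) = pcomp 2 1 1 pl R"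
    using rb unfolding pl_def pr_def by (simp add: add.commute)
  have pp1: "pcomp 2 2 1 \<pi> \<pi> \<in> Op 3" using mem[of 2 2 1 \<pi> \<pi>] pi by (simp add: numeral_eq_Suc)
  have pp2: "pcomp 2 2 2 \<pi> \<pi> \<in> Op 3" using mem[of 2 2 2 \<pi> \<pi>] pi by (simp add: numeral_eq_Suc)
  have parX: "\<And>X. X \<in> Op 2 \<Longrightarrow> pcomp 2 2 1 pl X = pcomp 3 1 3 (pcomp 2 2 1 \<pi> X) R"
    using par[of 2 2 1 1 2 \<pi> _ R] pi R unfolding pl_def by (simp add: numeral_eq_Suc)
  have F23: "\<And>F. F \<in> Op 3 \<Longrightarrow> pcomp 3 1 3 (pcomp 3 1 2 F R) R = pcomp 3 1 2 (pcomp 3 1 3 F R) R"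
    using par[of 3 1 1 2 3 _ R R] R by (simp add: numeral_eq_Suc)
  have F13: "\<And>F. F \<in> Op 3 \<Longrightarrow> pcomp 3 1 3 (pcomp 3 1 1 F R) R = pcomp 3 1 1 (pcomp 3 1 3 F R) R"
    using par[of 3 1 1 1 3 _ R R] R by (simp add: numeral_eq_Suc)
  have a1: "pcomp 2 2 1 \<pi> pl = pcomp 3 1 2 (pcomp 2 2 1 \<pi> \<pi>) R"
    using as[of 2 2 1 1 2 \<pi> \<pi> R] pi R unfolding pl_def by (simp add: numeral_eq_Suc)
  have a2: "pcomp 2 2 2 \<pi> pl = pcomp 3 1 3 (pcomp 2 2 2 \<pi> \<pi>) R"
    using as[of 2 2 1 2 2 \<pi> \<pi> R] pi R unfolding pl_def by (simp add: numeral_eq_Suc)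
  have a3: "pcomp 2 2 1 \<pi> pr = pcomp 3 1 1 (pcomp 2 2 1 \<pi> \<pi>) R"
    using as[of 2 2 1 1 1 \<pi> \<pi> R] pi R unfolding pr_def by (simp add: numeral_eq_Suc)
  have a4: "pcomp 2 2 2 \<pi> pr = pcomp 3 1 2 (pcomp 2 2 2 \<pi> \<pi>) R"
    using as[of 2 2 1 2 1 \<pi> \<pi> R] pi R unfolding pr_def by (simp add: numeral_eq_Suc)
  have g1: "pcomp 2 2 1 pl pl = pcomp 2 2 2 pl (pl + pr)"
  proof -
    have "pcomp 2 2 1 pl pl = pcomp 3 1 3 (pcomp 3 1 2 (pcomp 2 2 1 \<pi> \<pi>) R) R"
      using parX[OF pl] a1 by (simp add: numeral_eq_Suc)
    also have "\<dots> = pcomp 3 1 2 (pcomp 3 1 3 (pcomp 2 2 2 \<pi> \<pi>) R) R"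
      using F23[OF pp1] mul by (simp add: numeral_eq_Suc)
    also have "\<dots> = pcomp 3 1 2 (pcomp 2 2 2 \<pi> pl) R" using a2 by (simp add: numeral_eq_Suc)
    also have "\<dots> = pcomp 2 2 2 \<pi> (pcomp 2 1 1 pl R)"
      using as[of 2 2 1 2 1 \<pi> pl R] pi pl R by (simp add: numeral_eq_Suc)
    also have "\<dots> = pcomp 2 2 2 \<pi> (pcomp 1 2 1 R (pl + pr))" using rb' by (simp add: numeral_eq_Suc)
    also have "\<dots> = pcomp 2 2 2 pl (pl + pr)"
      using as[of 2 1 2 2 1 \<pi> R "pl + pr"] pi R P unfolding pl_def by (simp add: numeral_eq_Suc)
    finally show ?thesis .
  qed
  have g2: "pcomp 2 2 1 pl pr = pcomp 2 2 2 pr pl"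
  proof -
    have "pcomp 2 2 1 pl pr = pcomp 3 1 3 (pcomp 3 1 1 (pcomp 2 2 1 \<pi> \<pi>) R) R"
      using parX[OF prm] a3 by (simp add: numeral_eq_Suc)
    also have "\<dots> = pcomp 3 1 1 (pcomp 3 1 3 (pcomp 2 2 2 \<pi> \<pi>) R) R"
      using F13[OF pp1] mul by (simp add: numeral_eq_Suc)
    also have "\<dots> = pcomp 3 1 1 (pcomp 2 2 2 \<pi> pl) R" using a2 by (simp add: numeral_eq_Suc)
    also have "\<dots> = pcomp 2 2 2 pr pl"
      using par[of 2 1 2 1 2 \<pi> R pl] pi R pl unfolding pr_def by (simp add: numeral_eq_Suc)
    finally show ?thesis .
  qed
  have g3: "pcomp 2 2 1 pr (pl + pr) = pcomp 2 2 2 pr pr"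
  proof -
    have "pcomp 2 2 1 pr (pl + pr) = pcomp 2 2 1 \<pi> (pcomp 1 2 1 R (pl + pr))"
      using as[of 2 1 2 1 1 \<pi> R "pl + pr"] pi R P unfolding pr_def by (simp add: numeral_eq_Suc)
    also have "\<dots> = pcomp 2 2 1 \<pi> (pcomp 2 1 1 pl R)" using rb' by (simp add: numeral_eq_Suc)
    also have "\<dots> = pcomp 3 1 1 (pcomp 2 2 1 \<pi> pl) R"
      using as[of 2 2 1 1 1 \<pi> pl R] pi pl R by (simp add: numeral_eq_Suc)
    also have "\<dots> = pcomp 3 1 1 (pcomp 3 1 2 (pcomp 2 2 2 \<pi> \<pi>) R) R" using a1 mul by (simp add: numeral_eq_Suc)
    also have "\<dots> = pcomp 3 1 1 (pcomp 2 2 2 \<pi> pr) R" using a4 by (simp add: numeral_eq_Suc)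
    also have "\<dots> = pcomp 2 2 2 pr pr"
      using par[of 2 1 2 1 2 \<pi> R pr] pi R prm unfolding pr_def by (simp add: numeral_eq_Suc)
    finally show ?thesis .
  qed
  show ?thesis unfolding is_dendriform_multiplication_def
    using g1 g2 g3 pl prm unfolding pl_def pr_def by (simp add: numeral_eq_Suc)
qed

end
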